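(* Let $F:\widehat{\gamma}_{\mathrm{par}}\to\widehat{\gamma}_{\mathrm{vir}}$ and $H:\widehat{\gamma}_{\mathrm{vir}}\to\widehat{\gamma}_{\mathrm{par}}$ be the saddle morphisms $F=\mathrm{id}_{K_{\mathrm{cmn}}}\otimes(R\otimes_{R_{\mathrm p}}F_{\mathrm p})$, $H=\mathrm{id}_{K_{\mathrm{cmn}}}\otimes(R\otimes_{R_{\mathrm p}}H_{\mathrm p})$, where $F_{\mathrm p}:\widehat{\gamma}_{\mathrm{par,p}}\to\widehat{\gamma}_{\mathrm{vir,p}}$ and $H_{\mathrm p}:\widehat{\gamma}_{\mathrm{vir,p}}\to\widehat{\gamma}_{\mathrm{par,p}}$ are both given on the even part by $\begin{pmatrix}0&1\\ q_2^2-q_1^2C&0\end{pmatrix}$ and on the odd part by $\begin{pmatrix}q_2&-q_1\\ q_1C&-q_2\end{pmatrix}$. Then, as endomorphisms of $\widehat{\gamma}_{\mathrm{par}}$, \[ H\circ F\simeq 2\,\hat y_1\hat y_2-2(2N+1)\sum_{i=0}^{2N}\hat x_1^{\,i}\,\hat x_2^{\,2N-i}, \] where $\hat x_k,\hat y_k$ denote multiplication by $x_k,y_k$ and $\simeq$ denotes homotopy.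
   Context: Fix $N\ge1$, $w(x)=x^{2N+1}$, $W(x,y)=xy^2+x^{2N+1}$, iterated divided differences $w(x_1,\dots,x_n)=\frac{w(x_1,\dots,x_{n-2},x_{n-1})-w(x_1,\dots,x_{n-2},x_n)}{x_{n-1}-x_n}$. $R=\mathbb{Q}[x_1,\dots,x_4,y_1,\dots,y_4]$, $\deg x_i=2$, $\deg y_i=2N$; $W_4=\sum W(x_i,y_i)$. Matrix factorizations of $V$: $\mathbb{Z}/2$-graded free modules with odd $D$, $D^2=V$; two morphisms are homotopic if their difference is $DX+XD$ for an odd $X$. $A(i,j)$ is the Koszul matrix factorization (tensor product over $R$ of $Re_0\oplus Re_1$, $De_0=b e_1$, $De_1=a e_0$ for each row $(a\mid b)$) with rows $(y_j+y_i\mid x_j(y_j-y_i))$, $(x_j+x_i\mid y_i^2+w(-x_i,x_j))$; $\widehat{\gamma}_{\mathrm{par}}=A(1,3)\otimes A(2,4)$, $\widehat{\gamma}_{\mathrm{vir}}=A(1,4)\otimes A(2,3)$. $R_{\mathrm p}=\mathbb{Q}[p_1,p_2,q_1,q_2,r_1,r_2,C]$, $W_{4,\mathrm p}=p_1q_2r_2+q_1p_2r_2+r_1p_2q_2+p_1q_1r_1C$. $\widehat{\gamma}_{\mathrm{par,p}}$: $R_{\mathrm p}^2$ (odd) $\xrightarrow{P}$ $R_{\mathrm p}^2$ (even) $\xrightarrow{Q}$ $R_{\mathrm p}^2$ (odd) with $P=\begin{pmatrix}p_2&p_1\\ q_2r_2+q_1r_1C&-(q_2r_1+q_1r_2)\end{pmatrix}$,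 $Q=\begin{pmatrix}q_1r_2+q_2r_1&p_1\\ q_2r_2+q_1r_1C&-p_2\end{pmatrix}$; $\widehat{\gamma}_{\mathrm{vir,p}}$: same shape with $P=\begin{pmatrix}r_2&r_1\\ p_2q_2+p_1q_1C&-(p_1q_2+p_2q_1)\end{pmatrix}$, $Q=\begin{pmatrix}p_1q_2+p_2q_1&r_1\\ p_2q_2+p_1q_1C&-r_2\end{pmatrix}$. $\phi_{\mathrm p}:R_{\mathrm p}\to R$: $p_1\mapsto x_2+x_4$, $q_1\mapsto x_3+x_4$, $r_1\mapsto x_1+x_4$, $p_2\mapsto y_2+y_4$, $q_2\mapsto y_3+y_4$, $r_2\mapsto y_1+y_4$, $C\mapsto w(x_1,x_2,-x_3,x_4)+w(x_1,-x_1,x_2,x_4)+w(x_1,-x_1,-x_2,x_4)$; $R\otimes_{R_{\mathrm p}}$ denotes base change along $\phi_{\mathrm p}$. $K_{\mathrm{cmn}}$ is the Koszul matrix factorization with rows $(x_1+x_2+x_3+x_4\mid A)$, $(y_1+y_2+y_3+y_4\mid B)$, $A=-(y_3+y_4)(y_1+y_2+y_4)-y_1y_2+w(-x_1,x_3)+(x_2+x_4)w(x_1,x_2,-x_3)-(x_2+x_4)(x_1+x_4)(w(x_1,-x_1,x_2,x_4)+w(x_1,-x_1,-x_2,x_4))$, $B=x_1y_1+x_2y_2+x_3y_3-x_4y_4$; $K_{\mathrm{cmn}}\otimes_R(R\otimes_{R_{\mathrm p}}\widehat{\gamma}_{\mathrm{par,p}})\cong\widehat{\gamma}_{\mathrm{par}}$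 and similarly for vir, and $F,H$ are regarded as morphisms between $\widehat{\gamma}_{\mathrm{par}}$ and $\widehat{\gamma}_{\mathrm{vir}}$ via these isomorphisms. *)

theory Defs
  imports Complex_Main "HOL-Library.Poly_Mapping"
begin

text \<open>The polynomial ring R = Q[x1..x4,y1..y4] as multivariate polynomials:
  monomials are finitely supported exponent vectors.
  Variable number k is x_k for k = 1..4 and variable number 4+k is y_k.\<close>

type_synonym R = "(nat \<Rightarrow>\<^sub>0 nat) \<Rightarrow>\<^sub>0 rat"

definition Var :: "nat \<Rightarrow> R" where
  "Var n = Poly_Mapping.single (Poly_Mapping.single n 1) 1"

definition X :: "nat \<Rightarrow> R" where "X k = Var k"
definition Y :: "nat \<Rightarrow> R" where "Y k = Var (4 + k)"

text \<open>The function ddr takes the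
  argument list in reversed order (last argument first):
  w(x1,...,x_(n-2),a,b) = (w(x1,...,x_(n-2),a) - w(x1,...,x_(n-2),b)) / (a - b),
  rendered as the (unique, when a \<noteq> b) polynomial c with (a - b) * c = numerator.\<close>

fun ddr :: "nat \<Rightarrow> R list \<Rightarrow> R" where
  "ddr N [] = 0"
| "ddr N [a] = a ^ (2 * N + 1)"
| "ddr N (b # a # rest) = (THE c. (a - b) * c = ddr N (a # rest) - ddr N (b # rest))"

definition wdd :: "nat \<Rightarrow> R list \<Rightarrow> R" where
  "wdd N xs = ddr N (rev xs)"

text \<open>Matrices (with respect to finite bases) over R: M i j is the coefficient of the
  basis vector e_i in the image of e_j.\<close>

definition mmul :: "('a \<Rightarrow> 'b::finite \<Rightarrow> R) \<Rightarrow> ('b \<Rightarrow> 'c \<Rightarrow> R) \<Rightarrow> 'a \<Rightarrow> 'c \<Rightarrow> R" where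
  "mmul A B i k = (\<Sum>j\<in>UNIV. A i j * B j k)"

definition scal :: "R \<Rightarrow> 'a \<Rightarrow> 'a \<Rightarrow> R" where
  "scal c i j = (if i = j then c else 0)"

text \<open>Homotopy of endomorphisms f, g of a matrix factorization with basis parity par
  (True = odd) and differential D: f - g = D X + X D for an odd X.\<close>

definition homotopic :: "('a::finite \<Rightarrow> bool) \<Rightarrow> ('a \<Rightarrow> 'a \<Rightarrow> R) \<Rightarrow> ('a \<Rightarrow> 'a \<Rightarrow> R) \<Rightarrow> ('a \<Rightarrow> 'a \<Rightarrow> R) \<Rightarrow> bool" where
  "homotopic par D f g \<longleftrightarrow>
     (\<exists>Xh. (\<forall>i j. par i = par j \<longrightarrow> Xh i j = 0) \<and>
           (\<forall>i j. f i j - g i j = mmul D Xh i j + mmul Xh D i j))"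

text \<open>Koszul factorization of one row (a | b): basis e0 = False (even), e1 = True (odd),
  D e0 = b e1, D e1 = a e0.\<close>

definition koszul1 :: "R \<Rightarrow> R \<Rightarrow> bool \<Rightarrow> bool \<Rightarrow> R" where
  "koszul1 a b i j = (if \<not> i \<and> j then a else if i \<and> \<not> j then b else 0)"

definition tensD :: "('a \<Rightarrow> bool) \<Rightarrow> ('a \<Rightarrow> 'a \<Rightarrow> R) \<Rightarrow> ('b \<Rightarrow> 'b \<Rightarrow> R) \<Rightarrow> ('a \<times> 'b) \<Rightarrow> ('a \<times> 'b) \<Rightarrow> R" where
  "tensD p1 D1 D2 = (\<lambda>(i1, i2) (j1, j2).
      (if i2 = j2 then D1 i1 j1 else 0) +
      (if i1 = j1 then (if p1 j1 then - 1 else 1) * D2 i2 j2 else 0))"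

definition tensPar :: "('a \<Rightarrow> bool) \<Rightarrow> ('b \<Rightarrow> bool) \<Rightarrow> ('a \<times> 'b) \<Rightarrow> bool" where
  "tensPar p1 p2 = (\<lambda>(i1, i2). p1 i1 \<noteq> p2 i2)"

definition idTens :: "('b \<Rightarrow> 'b \<Rightarrow> R) \<Rightarrow> ('a \<times> 'b) \<Rightarrow> ('a \<times> 'b) \<Rightarrow> R" where
  "idTens f = (\<lambda>(i1, i2) (j1, j2). if i1 = j1 then f i2 j2 else 0)"

text \<open>2x2 matrices, index False = 1st, True = 2nd.\<close>
definition mat2 :: "R \<Rightarrow> R \<Rightarrow> R \<Rightarrow> R \<Rightarrow> bool \<Rightarrow> bool \<Rightarrow> R" where
  "mat2 a b c d i j = (if \<not> i then (if \<not> j then a else b) else (if \<not> j then c else d))"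

text \<open>Rank (2|2) factorization R^2 (odd) -P-> R^2 (even) -Q-> R^2 (odd);
  basis (parity, index), parity True = odd.\<close>
definition twoD :: "(bool \<Rightarrow> bool \<Rightarrow> R) \<Rightarrow> (bool \<Rightarrow> bool \<Rightarrow> R) \<Rightarrow> (bool \<times> bool) \<Rightarrow> (bool \<times> bool) \<Rightarrow> R" where
  "twoD P Q = (\<lambda>(si, i) (sj, j).
      if \<not> si \<and> sj then P i j else if si \<and> \<not> sj then Q i j else 0)"

definition evenOdd :: "(bool \<Rightarrow> bool \<Rightarrow> R) \<Rightarrow> (bool \<Rightarrow> bool \<Rightarrow> R) \<Rightarrow> (bool \<times> bool) \<Rightarrow> (bool \<times> bool) \<Rightarrow> R" where
  "evenOdd Ev Od = (\<lambda>(si, i) (sj, j). if si = sj then (if si then Od i j else Ev i j) else 0)"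

text \<open>Images under phi_p of the generators of R_p.\<close>
definition "pp1 = X 2 + X 4"
definition "qq1 = X 3 + X 4"
definition "rr1 = X 1 + X 4"
definition "pp2 = Y 2 + Y 4"
definition "qq2 = Y 3 + Y 4"
definition "rr2 = Y 1 + Y 4"
definition CC :: "nat \<Rightarrow> R" where
  "CC N = wdd N [X 1, X 2, - X 3, X 4] + wdd N [X 1, - X 1, X 2, X 4]
          + wdd N [X 1, - X 1, - X 2, X 4]"

definition gparD :: "nat \<Rightarrow> (bool \<times> bool) \<Rightarrow> (bool \<times> bool) \<Rightarrow> R" where
  "gparD N = twoD
     (mat2 pp2 pp1 (qq2 * rr2 + qq1 * rr1 * CC N) (- (qq2 * rr1 + qq1 * rr2)))
     (mat2 (qq1 * rr2 + qq2 * rr1) pp1 (qq2 * rr2 + qq1 * rr1 * CC N) (- pp2))"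

definition gvirD :: "nat \<Rightarrow> (bool \<times> bool) \<Rightarrow> (bool \<times> bool) \<Rightarrow> R" where
  "gvirD N = twoD
     (mat2 rr2 rr1 (pp2 * qq2 + pp1 * qq1 * CC N) (- (pp1 * qq2 + pp2 * qq1)))
     (mat2 (pp1 * qq2 + pp2 * qq1) rr1 (pp2 * qq2 + pp1 * qq1 * CC N) (- rr2))"

definition gPar :: "(bool \<times> bool) \<Rightarrow> bool" where "gPar = fst"

definition Acmn :: "nat \<Rightarrow> R" where
  "Acmn N = - (Y 3 + Y 4) * (Y 1 + Y 2 + Y 4) - Y 1 * Y 2 + wdd N [- X 1, X 3]
     + (X 2 + X 4) * wdd N [X 1, X 2, - X 3]
     - (X 2 + X 4) * (X 1 + X 4) * (wdd N [X 1, - X 1, X 2, X 4] + wdd N [X 1, - X 1, - X 2, X 4])"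

definition Bcmn :: R where
  "Bcmn = X 1 * Y 1 + X 2 * Y 2 + X 3 * Y 3 - X 4 * Y 4"

definition kPar :: "bool \<times> bool \<Rightarrow> bool" where "kPar = tensPar id id"

definition Kcmn :: "nat \<Rightarrow> (bool \<times> bool) \<Rightarrow> (bool \<times> bool) \<Rightarrow> R" where
  "Kcmn N = tensD id (koszul1 (X 1 + X 2 + X 3 + X 4) (Acmn N)) (koszul1 (Y 1 + Y 2 + Y 3 + Y 4) Bcmn)"

definition parityPV :: "(bool \<times> bool) \<times> (bool \<times> bool) \<Rightarrow> bool" where
  "parityPV = tensPar kPar gPar"

definition Dpar :: "nat \<Rightarrow> ((bool \<times> bool) \<times> (bool \<times> bool)) \<Rightarrow> ((bool \<times> bool) \<times> (bool \<times> bool)) \<Rightarrow> R" where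
  "Dpar N = tensD kPar (Kcmn N) (gparD N)"

definition Dvir :: "nat \<Rightarrow> ((bool \<times> bool) \<times> (bool \<times> bool)) \<Rightarrow> ((bool \<times> bool) \<times> (bool \<times> bool)) \<Rightarrow> R" where
  "Dvir N = tensD kPar (Kcmn N) (gvirD N)"

definition FpH :: "nat \<Rightarrow> (bool \<times> bool) \<Rightarrow> (bool \<times> bool) \<Rightarrow> R" where
  "FpH N = evenOdd (mat2 0 1 (qq2 ^ 2 - qq1 ^ 2 * CC N) 0) (mat2 qq2 (- qq1) (qq1 * CC N) (- qq2))"

definition Fmor :: "nat \<Rightarrow> ((bool \<times> bool) \<times> (bool \<times> bool)) \<Rightarrow> ((bool \<times> bool) \<times> (bool \<times> bool)) \<Rightarrow> R" where
  "Fmor N = idTens (FpH N)"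

definition Hmor :: "nat \<Rightarrow> ((bool \<times> bool) \<times> (bool \<times> bool)) \<Rightarrow> ((bool \<times> bool) \<times> (bool \<times> bool)) \<Rightarrow> R" where
  "Hmor N = idTens (FpH N)"

end

theory Submission
  imports Defs
begin

lemma R_nz: "(a::R) * b = 0 \<Longrightarrow> a = 0 \<or> b = 0" by simp

fun hs :: "nat \<Rightarrow> 'a::comm_ring_1 list \<Rightarrow> 'a" where
  "hs 0 l = 1"
| "hs (Suc d) [] = 0"
| "hs (Suc d) (a # l) = a * hs d (a # l) + hs (Suc d) l"

lemma hs_L: "(a - b) * hs d (a # b # l) = hs (Suc d) (a # l) - hs (Suc d) (b # l)"
proof (induction d)
  case 0 then show ?case by simp
next
  case (Suc d)
  have "(a - b) * hs (Suc d) (a # b # l) = a * ((a - b) * hs d (a # b # l)) + (a - b) * hs (Suc d) (b # l)"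
    by (simp add: algebra_simps)
  also have "\<dots> = a * (hs (Suc d) (a # l) - hs (Suc d) (b # l)) + (a - b) * hs (Suc d) (b # l)"
    using Suc by simp
  also have "\<dots> = hs (Suc (Suc d)) (a # l) - hs (Suc (Suc d)) (b # l)"
    by (simp add: algebra_simps)
  finally show ?case .
qed

lemma hs_single: "hs d [a] = a ^ d"
  by (induction d) auto

lemma hs_same: "hs d [a, a] = of_nat (d + 1) * a ^ d"
  by (induction d) (auto simp: hs_single algebra_simps)

lemma hs_swap: "hs d (a # b # l) = hs d (b # a # l)"
proof (induction d)
  case 0 then show ?case by simp
next
  case (Suc d)
  have L: "(a - b) * hs d (a # b # l) = a * hs d (a # l) - b * hs d (b # l)"
    using hs_L[of a b d l] by simp
  have "hs (Suc d) (a # b # l) = a * hs d (a # b # l) + b * hs d (b # l) + hs (Suc d) l" by simp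
  also have "\<dots> = b * hs d (a # b # l) + a * hs d (a # l) + hs (Suc d) l"
    using L by (simp add: algebra_simps)
  also have "\<dots> = hs (Suc d) (b # a # l)" using Suc by simp
  finally show ?case .
qed

lemma hs_tail: "(\<And>e. hs e l = hs e l') \<Longrightarrow> hs d (c # l) = hs d (c # l')"
  by (induction d) auto

lemma hs_pair: "b = - a \<Longrightarrow> hs (Suc (Suc d)) (a # b # l) = a^2 * hs d (a # b # l) + hs (Suc (Suc d)) l"
  by (simp add: algebra_simps power2_eq_square)

lemma hs_pair0: "hs (2 * k) [a, - a] = a ^ (2 * k)"
proof (induction k)
  case 0 then show ?case by simp
next
  case (Suc k)
  have "hs (2 * Suc k) [a, - a] = hs (Suc (Suc (2 * k))) [a, - a]" by simp
  also have "\<dots> = a^2 * hs (2*k) [a, - a]" by (subst hs_pair) auto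
  also have "\<dots> = a^2 * a ^ (2 * k)" using Suc by simp
  finally have "hs (2 * Suc k) [a, - a] = a^2 * a ^ (2 * k)" .
  moreover have "a ^ (2 * Suc k) = a^2 * a^(2*k)" by (simp add: power2_eq_square)
  ultimately show ?case by (simp only:)
qed

lemma ddr_hs: "distinct l \<Longrightarrow> l \<noteq> [] \<Longrightarrow> length l \<le> 2*N+2 \<Longrightarrow> ddr N l = hs (2*N+2 - length l) l"
proof (induction N l rule: ddr.induct)
  case (1 N) then show ?case by simp
next
  case (2 N a) then show ?case by (simp add: hs_single)
next
  case (3 N b a rest)
  define k where "k = 2*N - length rest"
  have lk: "2*N+2 - length (a # rest) = Suc k" "2*N+2 - length (b # rest) = Suc k"
     "2*N+2 - length (b # a # rest) = k"
    using 3(5) by (auto simp: k_def)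
  have e1: "ddr N (a # rest) = hs (Suc k) (a # rest)" using 3 lk by auto
  have e2: "ddr N (b # rest) = hs (Suc k) (b # rest)" using 3 lk by auto
  have key: "(a - b) * hs k (b # a # rest) = ddr N (a # rest) - ddr N (b # rest)"
    using hs_L[of b a k rest] e1 e2 by (simp add: algebra_simps)
  have ab: "a - b \<noteq> 0" using 3(3) by auto
  have "ddr N (b # a # rest) = hs k (b # a # rest)"
    unfolding ddr.simps
  proof (rule the_equality)
    show "(a - b) * hs k (b # a # rest) = ddr N (a # rest) - ddr N (b # rest)" by (rule key)
  next
    fix c assume "(a - b) * c = ddr N (a # rest) - ddr N (b # rest)"
    with key have "(a - b) * c = (a - b) * hs k (b # a # rest)" by simp
    with ab show "c = hs k (b # a # rest)" by simp
  qed
  then show ?case using lk by simp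
qed

definition coef :: "nat \<Rightarrow> R \<Rightarrow> rat" where "coef k p = Poly_Mapping.lookup p (Poly_Mapping.single k 1)"

lemma coef_add: "coef k (p + q) = coef k p + coef k q" by (simp add: coef_def lookup_add)
lemma coef_uminus: "coef k (- p) = - coef k p" by (simp add: coef_def)
lemma coef_Var: "coef k (Var n) = (if n = k then 1 else 0)"
proof -
  have "Poly_Mapping.single n (1::nat) = Poly_Mapping.single k 1 \<longleftrightarrow> n = k"
    by (metis lookup_single_eq lookup_single_not_eq zero_neq_one)
  then show ?thesis by (auto simp: coef_def Var_def lookup_single_not_eq)
qed

lemma Var_ne: "n \<noteq> m \<Longrightarrow> Var n \<noteq> Var m"
  using coef_Var[of n n] coef_Var[of n m] by auto
lemma Var_ne_neg: "Var n \<noteq> - Var m"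
  using coef_Var[of n n] coef_Var[of n m] coef_uminus[of n "Var m"] by (auto split: if_splits)
lemma Var_ne_neg2: "- Var n \<noteq> Var m"
  using Var_ne_neg[of m n] by auto
lemma Var_neg_ne: "n \<noteq> m \<Longrightarrow> - Var n \<noteq> - Var m"
  using Var_ne by auto

lemmas XY_defs = X_def Y_def

lemma test_distinct: "distinct [X 4, - X 3, X 2, X 1]"
  by (simp add: X_def Var_ne Var_ne_neg Var_ne_neg2 Var_neg_ne)


declare hs.simps(3)[simp del]

lemma pw2: "(x::'a::comm_ring_1) ^ (2 * Suc n + 2) = x^2 * x ^ (2*n+2)"
  by (simp add: power2_eq_square)

lemma T2rec: "hs (2 * Suc n) [v, -v, u, -(u::'a::comm_ring_1)] = v^2 * hs (2*n) [v, -v, u, -u] + u^(2*n+2)"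
proof -
  have "hs (2 * Suc n) [v, -v, u, -u] = hs (Suc (Suc (2*n))) [v, -v, u, -u]" by simp
  also have "\<dots> = v^2 * hs (2*n) [v, -v, u, -u] + hs (Suc (Suc (2*n))) [u, -u]"
    by (rule hs_pair) simp
  also have "hs (Suc (Suc (2*n))) [u, -u] = u^(2*n+2)"
    using hs_pair0[of "Suc n" u] by simp
  finally show ?thesis .
qed

lemma T1rec: "hs (2 * Suc n) [v, -v, u, (u::'a::comm_ring_1)] = v^2 * hs (2*n) [v, -v, u, u] + of_nat (2*n+3) * u^(2*n+2)"
proof -
  have "hs (2 * Suc n) [v, -v, u, u] = hs (Suc (Suc (2*n))) [v, -v, u, u]" by simp
  also have "\<dots> = v^2 * hs (2*n) [v, -v, u, u] + hs (Suc (Suc (2*n))) [u, u]"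
    by (rule hs_pair) simp
  also have "hs (Suc (Suc (2*n))) [u, u] = of_nat (2*n+3) * u^(2*n+2)"
    using hs_same[of "Suc (Suc (2*n))" u] by (simp add: algebra_simps)
  finally show ?thesis .
qed

lemma T3rec: "hs (2 * Suc n) [-u, u, v, (v::'a::comm_ring_1)] = u^2 * hs (2*n) [-u, u, v, v] + of_nat (2*n+3) * v^(2*n+2)"
proof -
  have "hs (2 * Suc n) [-u, u, v, v] = hs (Suc (Suc (2*n))) [-u, u, v, v]" by simp
  also have "\<dots> = (-u)^2 * hs (2*n) [-u, u, v, v] + hs (Suc (Suc (2*n))) [v, v]"
    by (rule hs_pair) simp
  also have "hs (Suc (Suc (2*n))) [v, v] = of_nat (2*n+3) * v^(2*n+2)"
    using hs_same[of "Suc (Suc (2*n))" v] by (simp add: algebra_simps)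
  finally show ?thesis by simp
qed

lemma C2: "(v^2 - u^2) * hs (2*n) [v, -v, u, -(u::'a::comm_ring_1)] = v^(2*n+2) - u^(2*n+2)"
proof (induction n)
  case 0 then show ?case by (simp add: power2_eq_square)
next
  case (Suc n)
  define T where "T = hs (2*n) [v, -v, u, -u]"
  define P where "P = v^(2*n+2)"
  define Q where "Q = u^(2*n+2)"
  have IH: "(v^2 - u^2) * T = P - Q" using Suc by (simp add: T_def P_def Q_def)
  have "(v^2 - u^2) * hs (2 * Suc n) [v, -v, u, -u] = v^2 * ((v^2 - u^2) * T) + (v^2 - u^2) * Q"
    unfolding T2rec T_def Q_def by (simp add: algebra_simps)
  also have "\<dots> = v^2 * P - u^2 * Q" unfolding IH by (simp add: algebra_simps)
  also have "\<dots> = v^(2*Suc n+2) - u^(2*Suc n+2)" unfolding pw2 P_def Q_def by (rule refl)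
  finally show ?case .
qed

lemma T2alt:
  assumes nz: "v^2 - u^2 \<noteq> (0::'a::idom)"
  shows "hs (2 * Suc n) [v, -v, u, -u] = u^2 * hs (2*n) [v, -v, u, -u] + v^(2*n+2)"
proof -
  define T where "T = hs (2*n) [v, -v, u, -u]"
  define P where "P = v^(2*n+2)"
  define Q where "Q = u^(2*n+2)"
  have IH: "(v^2 - u^2) * T = P - Q" using C2[of v u n] by (simp add: T_def P_def Q_def)
  have "(v^2 - u^2) * hs (2 * Suc n) [v, -v, u, -u] = v^2 * P - u^2 * Q"
    using C2[of v u "Suc n"] unfolding pw2 P_def Q_def .
  also have "\<dots> = u^2 * ((v^2 - u^2) * T) + (v^2 - u^2) * P" unfolding IH by (simp add: algebra_simps)
  also have "\<dots> = (v^2 - u^2) * (u^2 * T + P)" by (simp add: algebra_simps)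
  finally show ?thesis using nz by (simp add: T_def P_def)
qed

lemma C1: "(v^2 - u^2) * hs (2*n) [v, -v, u, (u::'a::comm_ring_1)]
   = 2 * v^2 * hs (2*n) [v, -v, u, -u] - v^(2*n+2) - of_nat (2*n+1) * u^(2*n+2)"
proof (induction n)
  case 0 then show ?case by (simp add: algebra_simps power2_eq_square)
next
  case (Suc n)
  define T where "T = hs (2*n) [v, -v, u, u]"
  define S where "S = hs (2*n) [v, -v, u, -u]"
  define P where "P = v^(2*n+2)"
  define Q where "Q = u^(2*n+2)"
  have IH: "(v^2 - u^2) * T = 2 * v^2 * S - P - of_nat (2*n+1) * Q"
    using Suc by (simp add: T_def S_def P_def Q_def)
  have "(v^2 - u^2) * hs (2 * Suc n) [v, -v, u, u] = v^2 * ((v^2 - u^2) * T) + of_nat (2*n+3) * (v^2 - u^2) * Q"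
    unfolding T1rec T_def Q_def by (simp add: algebra_simps)
  also have "\<dots> = 2 * v^2 * (v^2 * S + Q) - v^2 * P - of_nat (2*Suc n+1) * (u^2 * Q)"
    unfolding IH by (simp add: algebra_simps)
  also have "\<dots> = 2 * v^2 * hs (2 * Suc n) [v, -v, u, -u] - v^(2*Suc n+2) - of_nat (2*Suc n+1) * u^(2*Suc n+2)"
    unfolding T2rec pw2 S_def P_def Q_def by (simp add: algebra_simps)
  finally show ?case .
qed

lemma C3:
  assumes nz: "v^2 - u^2 \<noteq> (0::'a::idom)"
  shows "(u^2 - v^2) * hs (2*n) [-u, u, v, v]
   = 2 * u^2 * hs (2*n) [v, -v, u, -u] - u^(2*n+2) - of_nat (2*n+1) * v^(2*n+2)"
proof (induction n)
  case 0 then show ?case by (simp add: algebra_simps power2_eq_square)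
next
  case (Suc n)
  define T where "T = hs (2*n) [-u, u, v, v]"
  define S where "S = hs (2*n) [v, -v, u, -u]"
  define P where "P = v^(2*n+2)"
  define Q where "Q = u^(2*n+2)"
  have IH: "(u^2 - v^2) * T = 2 * u^2 * S - Q - of_nat (2*n+1) * P"
    using Suc by (simp add: T_def S_def P_def Q_def)
  have "(u^2 - v^2) * hs (2 * Suc n) [-u, u, v, v] = u^2 * ((u^2 - v^2) * T) + of_nat (2*n+3) * (u^2 - v^2) * P"
    unfolding T3rec T_def P_def by (simp add: algebra_simps)
  also have "\<dots> = 2 * u^2 * (u^2 * S + P) - u^2 * Q - of_nat (2*Suc n+1) * (v^2 * P)"
    unfolding IH by (simp add: algebra_simps)
  also have "\<dots> = 2 * u^2 * hs (2 * Suc n) [v, -v, u, -u] - u^(2*Suc n+2) - of_nat (2*Suc n+1) * v^(2*Suc n+2)"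
    unfolding T2alt[OF nz] pw2 S_def P_def Q_def by (simp add: algebra_simps)
  finally show ?case .
qed

lemma Cprime:
  assumes nz: "v^2 - u^2 \<noteq> (0::'a::idom)"
  shows "(v^2 - u^2) * (hs (2*n) [v, -v, u, u] + hs (2*n) [v, -v, u, -u] + hs (2*n) [-u, u, v, v])
     = of_nat (2*n+3) * (v^(2*n+2) - u^(2*n+2))"
proof -
  define S where "S = hs (2*n) [v, -v, u, -u]"
  define P where "P = v^(2*n+2)"
  define Q where "Q = u^(2*n+2)"
  have c2: "(v^2 - u^2) * S = P - Q" using C2[of v u n] by (simp add: S_def P_def Q_def)
  have c1: "(v^2 - u^2) * hs (2*n) [v, -v, u, u] = 2 * v^2 * S - P - of_nat (2*n+1) * Q"
    using C1[of v u n] by (simp add: S_def P_def Q_def)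
  have c3: "(u^2 - v^2) * hs (2*n) [-u, u, v, v] = 2 * u^2 * S - Q - of_nat (2*n+1) * P"
    using C3[OF nz, of n] by (simp add: S_def P_def Q_def)
  have "(v^2 - u^2) * (hs (2*n) [v, -v, u, u] + hs (2*n) [v, -v, u, -u] + hs (2*n) [-u, u, v, v])
     = (v^2 - u^2) * hs (2*n) [v, -v, u, u] + (v^2 - u^2) * S - (u^2 - v^2) * hs (2*n) [-u, u, v, v]"
    by (simp add: S_def algebra_simps)
  also have "\<dots> = 3 * ((v^2 - u^2) * S) + of_nat (2*n) * (P - Q)"
    unfolding c1 c3 by (simp add: algebra_simps)
  also have "\<dots> = of_nat (2*n+3) * (P - Q)" unfolding c2 by (simp add: algebra_simps)
  finally show ?thesis by (simp add: P_def Q_def)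
qed


definition nh :: "('a::finite \<Rightarrow> bool) \<Rightarrow> ('a \<Rightarrow> 'a \<Rightarrow> R) \<Rightarrow> R \<Rightarrow> bool" where
  "nh p D r \<longleftrightarrow> (\<exists>Xh. (\<forall>i j. p i = p j \<longrightarrow> Xh i j = 0) \<and>
      (\<forall>i j. scal r i j = mmul D Xh i j + mmul Xh D i j))"

lemma nh_add:
  assumes "nh p D r" "nh p D s" shows "nh p D (r + s)"
proof -
  obtain X1 where o1: "\<forall>i j. p i = p j \<longrightarrow> X1 i j = 0" and h1: "\<forall>i j. scal r i j = mmul D X1 i j + mmul X1 D i j"
    using assms(1) unfolding nh_def by blast
  obtain X2 where o2: "\<forall>i j. p i = p j \<longrightarrow> X2 i j = 0" and h2: "\<forall>i j. scal s i j = mmul D X2 i j + mmul X2 D i j"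
    using assms(2) unfolding nh_def by blast
  show ?thesis unfolding nh_def
  proof (intro exI[of _ "\<lambda>i j. X1 i j + X2 i j"] conjI allI impI)
    fix i j :: 'a assume "p i = p j" then show "X1 i j + X2 i j = 0" using o1 o2 by simp
  next
    fix i j :: 'a
    have "scal (r + s) i j = scal r i j + scal s i j" by (simp add: scal_def)
    also have "\<dots> = mmul D X1 i j + mmul X1 D i j + (mmul D X2 i j + mmul X2 D i j)" using h1 h2 by simp
    also have "\<dots> = mmul D (\<lambda>i j. X1 i j + X2 i j) i j + mmul (\<lambda>i j. X1 i j + X2 i j) D i j"
      by (simp add: mmul_def sum.distrib algebra_simps)
    finally show "scal (r + s) i j = mmul D (\<lambda>i j. X1 i j + X2 i j) i j + mmul (\<lambda>i j. X1 i j + X2 i j) D i j" .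
  qed
qed

lemma nh_mult:
  assumes "nh p D r" shows "nh p D (c * r)"
proof -
  obtain X1 where o1: "\<forall>i j. p i = p j \<longrightarrow> X1 i j = 0" and h1: "\<forall>i j. scal r i j = mmul D X1 i j + mmul X1 D i j"
    using assms(1) unfolding nh_def by blast
  show ?thesis unfolding nh_def
  proof (intro exI[of _ "\<lambda>i j. c * X1 i j"] conjI allI impI)
    fix i j :: 'a assume "p i = p j" then show "c * X1 i j = 0" using o1 by simp
  next
    fix i j :: 'a
    have "scal (c * r) i j = c * scal r i j" by (simp add: scal_def)
    also have "\<dots> = c * (mmul D X1 i j + mmul X1 D i j)" using h1 by simp
    also have "\<dots> = mmul D (\<lambda>i j. c * X1 i j) i j + mmul (\<lambda>i j. c * X1 i j) D i j"
      by (simp add: mmul_def sum_distrib_left algebra_simps)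
    finally show "scal (c * r) i j = mmul D (\<lambda>i j. c * X1 i j) i j + mmul (\<lambda>i j. c * X1 i j) D i j" .
  qed
qed

lemma nh_zero: "nh p D 0"
  unfolding nh_def by (intro exI[of _ "\<lambda>i j. 0"]) (simp add: mmul_def scal_def)

lemma sum_UNIV_prod: "(\<Sum>j\<in>(UNIV::('a::finite \<times> 'b::finite) set). f j) = (\<Sum>a\<in>UNIV. \<Sum>b\<in>UNIV. f (a, b))"
  by (simp add: sum.cartesian_product)

lemma ifz_mult: "(if P then x else 0) * (y::'a::semiring_0) = (if P then x * y else 0)" by simp
lemma mult_ifz: "(y::'a::semiring_0) * (if P then x else 0) = (if P then y * x else 0)" by simp

lemma sum_ifP: "(\<Sum>b\<in>A. if P then f b else (0::'a::comm_monoid_add)) = (if P then \<Sum>b\<in>A. f b else 0)"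
  by simp

definition sgnp :: "('a \<Rightarrow> bool) \<Rightarrow> 'a \<Rightarrow> R" where "sgnp p a = (if p a then - 1 else 1)"

lemma tensD_alt: "tensD p1 D1 D2 (i1, i2) (j1, j2) =
   (if i2 = j2 then D1 i1 j1 else 0) + (if i1 = j1 then sgnp p1 j1 * D2 i2 j2 else 0)"
  by (simp add: tensD_def sgnp_def)

lemma tens_left:
  assumes "nh p1 D1 c" shows "nh (tensPar p1 p2) (tensD p1 D1 D2) c"
proof -
  obtain X1 where o1: "\<forall>i j. p1 i = p1 j \<longrightarrow> X1 i j = 0" and h1: "\<forall>i j. scal c i j = mmul D1 X1 i j + mmul X1 D1 i j"
    using assms(1) unfolding nh_def by blast
  define L where "L = (\<lambda>(i1::'a, i2::'b) (j1::'a, j2::'b). if i2 = j2 then X1 i1 j1 else 0)"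
  show ?thesis unfolding nh_def
  proof (intro exI[of _ L] conjI allI impI)
    fix i j :: "'a \<times> 'b" assume "tensPar p1 p2 i = tensPar p1 p2 j" then show "L i j = 0"
      using o1 by (cases i; cases j) (auto simp: L_def tensPar_def)
  next
    fix i j :: "'a \<times> 'b"
    obtain i1 i2 where i: "i = (i1, i2)" by (cases i)
    obtain k1 k2 where j: "j = (k1, k2)" by (cases j)
    have m1: "mmul (tensD p1 D1 D2) L (i1, i2) (k1, k2) =
       (if i2 = k2 then mmul D1 X1 i1 k1 else 0) + sgnp p1 i1 * D2 i2 k2 * X1 i1 k1"
      by (simp add: mmul_def sum_UNIV_prod tensD_alt L_def distrib_right sum.distrib ifz_mult mult_ifz
            if_distrib[of "\<lambda>x. x * _"] sum.delta sum.delta' cong: if_cong)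
    have m2: "mmul L (tensD p1 D1 D2) (i1, i2) (k1, k2) =
       (if i2 = k2 then mmul X1 D1 i1 k1 else 0) + sgnp p1 k1 * D2 i2 k2 * X1 i1 k1"
      by (simp add: mmul_def sum_UNIV_prod tensD_alt L_def distrib_left sum.distrib ifz_mult mult_ifz
            sum.delta sum.delta' sum_ifP cong: if_cong)
    have z: "sgnp p1 i1 * D2 i2 k2 * X1 i1 k1 + sgnp p1 k1 * D2 i2 k2 * X1 i1 k1 = 0"
      using o1 by (cases "p1 i1 = p1 k1") (auto simp: sgnp_def)
    have h1': "scal c i1 k1 = mmul D1 X1 i1 k1 + mmul X1 D1 i1 k1" using h1 by blast
    have sc: "scal c (i1, i2) (k1, k2) = (if i2 = k2 then mmul D1 X1 i1 k1 else 0) + (if i2 = k2 then mmul X1 D1 i1 k1 else 0)"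
    proof -
      have "scal c (i1, i2) (k1, k2) = (if i2 = k2 then scal c i1 k1 else 0)" by (simp add: scal_def)
      then show ?thesis unfolding h1' by simp
    qed
    show "scal c i j = mmul (tensD p1 D1 D2) L i j + mmul L (tensD p1 D1 D2) i j"
      unfolding i j m1 m2 sc using z by (simp add: algebra_simps)
  qed
qed

lemma tens_right:
  assumes oD: "\<forall>i j. p1 i = p1 j \<longrightarrow> D1 i j = 0" and "nh p2 D2 c"
  shows "nh (tensPar p1 p2) (tensD p1 D1 D2) c"
proof -
  obtain X2 where o2: "\<forall>i j. p2 i = p2 j \<longrightarrow> X2 i j = 0" and h2: "\<forall>i j. scal c i j = mmul D2 X2 i j + mmul X2 D2 i j"
    using assms(2) unfolding nh_def by blast
  define L where "L = (\<lambda>(i1::'a, i2::'b) (j1::'a, j2::'b). if i1 = j1 then sgnp p1 i1 * X2 i2 j2 else 0)"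
  show ?thesis unfolding nh_def
  proof (intro exI[of _ L] conjI allI impI)
    fix i j :: "'a \<times> 'b" assume "tensPar p1 p2 i = tensPar p1 p2 j" then show "L i j = 0"
      using o2 by (cases i; cases j) (auto simp: L_def tensPar_def)
  next
    fix i j :: "'a \<times> 'b"
    obtain i1 i2 where i: "i = (i1, i2)" by (cases i)
    obtain k1 k2 where j: "j = (k1, k2)" by (cases j)
    have m1: "mmul (tensD p1 D1 D2) L (i1, i2) (k1, k2) =
       D1 i1 k1 * (sgnp p1 k1 * X2 i2 k2) + (if i1 = k1 then sgnp p1 k1 * sgnp p1 k1 * mmul D2 X2 i2 k2 else 0)"
      by (simp add: mmul_def sum_UNIV_prod tensD_alt L_def distrib_right sum.distrib ifz_mult mult_ifz
            sum.delta sum.delta' sum_ifP sum_distrib_left algebra_simps cong: if_cong)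
    have m2: "mmul L (tensD p1 D1 D2) (i1, i2) (k1, k2) =
       sgnp p1 i1 * X2 i2 k2 * D1 i1 k1 + (if i1 = k1 then sgnp p1 i1 * sgnp p1 k1 * mmul X2 D2 i2 k2 else 0)"
      by (simp add: mmul_def sum_UNIV_prod tensD_alt L_def distrib_left sum.distrib ifz_mult mult_ifz
            sum.delta sum.delta' sum_ifP sum_distrib_left algebra_simps cong: if_cong)
    have z: "D1 i1 k1 * (sgnp p1 k1 * X2 i2 k2) + sgnp p1 i1 * X2 i2 k2 * D1 i1 k1 = 0"
      using oD by (cases "p1 i1 = p1 k1") (auto simp: sgnp_def)
    have ss: "sgnp p1 k1 * sgnp p1 k1 = 1" by (simp add: sgnp_def)
    have h2': "scal c i2 k2 = mmul D2 X2 i2 k2 + mmul X2 D2 i2 k2" using h2 by blast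
    have sc: "scal c (i1, i2) (k1, k2) = (if i1 = k1 then mmul D2 X2 i2 k2 else 0) + (if i1 = k1 then mmul X2 D2 i2 k2 else 0)"
    proof -
      have "scal c (i1, i2) (k1, k2) = (if i1 = k1 then scal c i2 k2 else 0)" by (simp add: scal_def)
      then show ?thesis unfolding h2' by simp
    qed
    have m1': "mmul (tensD p1 D1 D2) L (i1, i2) (k1, k2) =
       D1 i1 k1 * (sgnp p1 k1 * X2 i2 k2) + (if i1 = k1 then mmul D2 X2 i2 k2 else 0)"
      unfolding m1 using ss by simp
    have m2': "mmul L (tensD p1 D1 D2) (i1, i2) (k1, k2) =
       sgnp p1 i1 * X2 i2 k2 * D1 i1 k1 + (if i1 = k1 then mmul X2 D2 i2 k2 else 0)"
      unfolding m2 using ss by auto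
    show "scal c i j = mmul (tensD p1 D1 D2) L i j + mmul L (tensD p1 D1 D2) i j"
      unfolding i j m1' m2' sc using z by (simp add: algebra_simps)
  qed
qed

lemma tensD_odd:
  assumes "\<forall>i j. p1 i = p1 j \<longrightarrow> D1 i j = 0" "\<forall>i j. p2 i = p2 j \<longrightarrow> D2 i j = 0"
  shows "\<forall>i j. tensPar p1 p2 i = tensPar p1 p2 j \<longrightarrow> tensD p1 D1 D2 i j = 0"
proof (intro allI impI)
  fix i j :: "'a \<times> 'b" assume a: "tensPar p1 p2 i = tensPar p1 p2 j"
  obtain i1 i2 where i: "i = (i1, i2)" by (cases i)
  obtain k1 k2 where j: "j = (k1, k2)" by (cases j)
  show "tensD p1 D1 D2 i j = 0" using a assms unfolding i j tensD_alt tensPar_def by auto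
qed

lemma sum_bool: "(\<Sum>b\<in>(UNIV::bool set). f b) = f False + f True"
  by (simp add: UNIV_bool)

lemma koszul_odd: "\<forall>i j. id i = id j \<longrightarrow> koszul1 a b i j = 0"
  by (simp add: koszul1_def)

lemma koszul_nh_a: "nh id (koszul1 a b) a"
  unfolding nh_def
  by (intro exI[of _ "\<lambda>i j. if i \<and> \<not> j then 1 else 0"]) (auto simp: mmul_def sum_bool koszul1_def scal_def)

lemma koszul_nh_b: "nh id (koszul1 a b) b"
  unfolding nh_def
  by (intro exI[of _ "\<lambda>i j. if \<not> i \<and> j then 1 else 0"]) (auto simp: mmul_def sum_bool koszul1_def scal_def)

definition kos2 :: "R \<Rightarrow> R \<Rightarrow> R \<Rightarrow> R \<Rightarrow> (bool \<times> bool) \<Rightarrow> (bool \<times> bool) \<Rightarrow> R" where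
  "kos2 a1 b1 a2 b2 = twoD (mat2 a1 a2 b2 (- b1)) (mat2 b1 a2 b2 (- a1))"

lemma sum_bb: "(\<Sum>j\<in>(UNIV::(bool \<times> bool) set). f j) = f (False, False) + f (False, True) + f (True, False) + f (True, True)"
  by (simp add: sum_UNIV_prod sum_bool add.assoc)

lemma kos2_nh:
  "nh fst (kos2 a1 b1 a2 b2) a1" "nh fst (kos2 a1 b1 a2 b2) a2"
  "nh fst (kos2 a1 b1 a2 b2) b1" "nh fst (kos2 a1 b1 a2 b2) b2"
  unfolding nh_def
  subgoal by (intro exI[of _ "twoD (mat2 0 0 0 (-1)) (mat2 1 0 0 0)"] conjI)
    (simp_all add: mmul_def sum_bb kos2_def twoD_def mat2_def scal_def split_paired_All all_bool_eq)
  subgoal by (intro exI[of _ "twoD (mat2 0 0 1 0) (mat2 0 0 1 0)"] conjI)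
    (simp_all add: mmul_def sum_bb kos2_def twoD_def mat2_def scal_def split_paired_All all_bool_eq)
  subgoal by (intro exI[of _ "twoD (mat2 1 0 0 0) (mat2 0 0 0 (-1))"] conjI)
    (simp_all add: mmul_def sum_bb kos2_def twoD_def mat2_def scal_def split_paired_All all_bool_eq)
  subgoal by (intro exI[of _ "twoD (mat2 0 1 0 0) (mat2 0 1 0 0)"] conjI)
    (simp_all add: mmul_def sum_bb kos2_def twoD_def mat2_def scal_def split_paired_All all_bool_eq)
  done

lemma idTens_mmul: "mmul (idTens f) (idTens g) = idTens (mmul f g)"
proof (intro ext)
  fix i j :: "'a \<times> 'b"
  obtain i1 i2 where i: "i = (i1, i2)" by (cases i)
  obtain k1 k2 where j: "j = (k1, k2)" by (cases j)
  show "mmul (idTens f) (idTens g) i j = idTens (mmul f g) i j"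
    unfolding i j
    by (simp add: mmul_def sum_UNIV_prod idTens_def ifz_mult mult_ifz sum.delta sum.delta' sum_ifP cong: if_cong)
qed

lemma idTens_scal: "idTens (scal c) = (scal c :: ('a \<times> 'b) \<Rightarrow> _)"
proof (intro ext)
  fix i j :: "'a \<times> 'b"
  show "idTens (scal c) i j = scal c i j" by (cases i; cases j) (auto simp: idTens_def scal_def)
qed


declare hs.simps(3)[simp del]

definition cg :: "('a::finite \<Rightarrow> bool) \<Rightarrow> ('a \<Rightarrow> 'a \<Rightarrow> R) \<Rightarrow> R \<Rightarrow> R \<Rightarrow> bool" where
  "cg p D a b \<longleftrightarrow> nh p D (a - b)"

lemma nh_uminus: "nh p D r \<Longrightarrow> nh p D (- r)"
  using nh_mult[of p D r "- 1"] by simp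
lemma nh_diff: "nh p D r \<Longrightarrow> nh p D s \<Longrightarrow> nh p D (r - s)"
  using nh_add[of p D r "- s"] nh_uminus[of p D s] by simp

lemma cg_refl: "cg p D a a" by (simp add: cg_def nh_zero)
lemma cg_add: "cg p D a a' \<Longrightarrow> cg p D b b' \<Longrightarrow> cg p D (a + b) (a' + b')"
  unfolding cg_def using nh_add[of p D "a - a'" "b - b'"] by (simp add: algebra_simps)
lemma cg_diff: "cg p D a a' \<Longrightarrow> cg p D b b' \<Longrightarrow> cg p D (a - b) (a' - b')"
  unfolding cg_def using nh_diff[of p D "a - a'" "b - b'"] by (simp add: algebra_simps)
lemma cg_uminus: "cg p D a a' \<Longrightarrow> cg p D (- a) (- a')"
  unfolding cg_def using nh_uminus[of p D "a - a'"] by (simp add: algebra_simps)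
lemma cg_mult: "cg p D a a' \<Longrightarrow> cg p D b b' \<Longrightarrow> cg p D (a * b) (a' * b')"
proof -
  assume h: "cg p D a a'" "cg p D b b'"
  have "nh p D (a * (b - b') + b' * (a - a'))"
    using h unfolding cg_def by (intro nh_add nh_mult)
  moreover have "a * (b - b') + b' * (a - a') = a * b - a' * b'" by (simp add: algebra_simps)
  ultimately show ?thesis unfolding cg_def by simp
qed
lemma cg_pow: "cg p D a a' \<Longrightarrow> cg p D (a ^ n) (a' ^ n)"
  by (induction n) (auto intro: cg_mult cg_refl)
lemma cg_sum: "finite A \<Longrightarrow> (\<And>i. i \<in> A \<Longrightarrow> cg p D (f i) (g i)) \<Longrightarrow> cg p D (sum f A) (sum g A)"
  by (induction A rule: finite_induct) (auto intro: cg_add cg_refl)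
lemma cg_sum': "(\<And>i. cg p D (f i) (g i)) \<Longrightarrow> cg p D (sum f {a..b::nat}) (sum g {a..b})"
  by (rule cg_sum) auto
lemma cg_trans: "cg p D a b \<Longrightarrow> cg p D b c \<Longrightarrow> cg p D a c"
  unfolding cg_def using nh_add[of p D "a - b" "b - c"] by simp
lemma cg_sym: "cg p D a b \<Longrightarrow> cg p D b a"
  unfolding cg_def using nh_uminus[of p D "a - b"] by simp
lemma cg_eqr: "cg p D a b \<Longrightarrow> b = c \<Longrightarrow> cg p D a c" by simp
lemma cg_zero: "nh p D r \<Longrightarrow> cg p D r 0" by (simp add: cg_def)
lemma nh_cg: "cg p D a b \<Longrightarrow> nh p D b \<Longrightarrow> nh p D a"
  unfolding cg_def using nh_add[of p D "a - b" b] by simp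

lemma cg_hs: "list_all2 (cg p D) l l' \<Longrightarrow> cg p D (hs d l) (hs d l')"
proof (induction d l arbitrary: l' rule: hs.induct)
  case (1 l) then show ?case by (simp add: cg_refl)
next
  case (2 d) then show ?case by (simp add: cg_refl)
next
  case (3 d a l)
  then obtain a' l'' where l': "l' = a' # l''" and h: "cg p D a a'" "list_all2 (cg p D) l l''"
    by (cases l') auto
  have "cg p D (hs d (a # l)) (hs d (a' # l''))" using 3(1) 3(3) l' by simp
  moreover have "cg p D (hs (Suc d) l) (hs (Suc d) l'')" using 3(2) h by simp
  ultimately show ?case unfolding l' hs.simps(3) using h by (intro cg_add cg_mult)
qed


declare hs.simps(3)[simp del]

lemma Kodd: "\<forall>i j. kPar i = kPar j \<longrightarrow> Kcmn N i j = 0"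
  unfolding kPar_def Kcmn_def by (rule tensD_odd[OF koszul_odd koszul_odd])

lemma gpar_kos: "gparD N = kos2 pp2 (qq1 * rr2 + qq2 * rr1) pp1 (qq2 * rr2 + qq1 * rr1 * CC N)"
  unfolding gparD_def kos2_def by (simp add: ac_simps)

abbreviation ZZ :: "nat \<Rightarrow> R \<Rightarrow> bool" where "ZZ N \<equiv> nh parityPV (Dpar N)"
abbreviation CG :: "nat \<Rightarrow> R \<Rightarrow> R \<Rightarrow> bool" where "CG N \<equiv> cg parityPV (Dpar N)"

lemma nh_g:
  "ZZ N pp2" "ZZ N pp1" "ZZ N (qq2 * rr2 + qq1 * rr1 * CC N)"
  unfolding parityPV_def Dpar_def gPar_def gpar_kos
  by (rule tens_right[OF Kodd kos2_nh(1)] tens_right[OF Kodd kos2_nh(2)] tens_right[OF Kodd kos2_nh(4)])+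

lemma nh_k:
  "ZZ N (X 1 + X 2 + X 3 + X 4)" "ZZ N (Acmn N)" "ZZ N (Y 1 + Y 2 + Y 3 + Y 4)"
  unfolding parityPV_def Dpar_def kPar_def Kcmn_def
  by (rule tens_left[OF tens_left[OF koszul_nh_a]] tens_left[OF tens_left[OF koszul_nh_b]]
        tens_left[OF tens_right[OF koszul_odd koszul_nh_a]])+

lemma cX2: "CG N (X 2) (- X 4)"
  using cg_zero[OF nh_g(2)[of N]] unfolding cg_def pp1_def by simp
lemma cY2: "CG N (Y 2) (- Y 4)"
  using cg_zero[OF nh_g(1)[of N]] unfolding cg_def pp2_def by simp
lemma cX3: "CG N (X 3) (- X 1)"
proof -
  have "ZZ N ((X 1 + X 2 + X 3 + X 4) - pp1)" by (intro nh_diff nh_g nh_k)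
  then show ?thesis unfolding cg_def pp1_def by (simp add: algebra_simps)
qed
lemma cY3: "CG N (Y 3) (- Y 1)"
proof -
  have "ZZ N ((Y 1 + Y 2 + Y 3 + Y 4) - pp2)" by (intro nh_diff nh_g nh_k)
  then show ?thesis unfolding cg_def pp2_def by (simp add: algebra_simps)
qed
lemma cmX3: "CG N (- X 3) (X 1)" using cg_uminus[OF cX3] by simp
lemma cmX2: "CG N (- X 2) (X 4)" using cg_uminus[OF cX2] by simp
lemma cX24: "CG N (X 2 + X 4) 0" using cg_zero[OF nh_g(2)[of N]] unfolding pp1_def .

lemma Var_nz: "Var n \<noteq> 0"
proof
  assume "Var n = 0"
  then have "coef n (Var n) = 0" by (simp add: coef_def)
  then show False by (simp add: coef_Var)
qed

lemmas Xdist = X_def Var_ne Var_ne_neg Var_ne_neg2 Var_neg_ne Var_nz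

lemma w1: "wdd (Suc n) [X 1, X 2, - X 3, X 4] = hs (2*n) [X 4, - X 3, X 2, X 1]"
  unfolding wdd_def by (subst ddr_hs) (auto simp: Xdist)
lemma w2: "wdd (Suc n) [X 1, - X 1, X 2, X 4] = hs (2*n) [X 4, X 2, - X 1, X 1]"
  unfolding wdd_def by (subst ddr_hs) (auto simp: Xdist)
lemma w3: "wdd (Suc n) [X 1, - X 1, - X 2, X 4] = hs (2*n) [X 4, - X 2, - X 1, X 1]"
  unfolding wdd_def by (subst ddr_hs) (auto simp: Xdist)
lemma wA: "wdd N [- X 1, X 3] = hs (2*N) [X 3, - X 1]"
  unfolding wdd_def by (subst ddr_hs) (auto simp: Xdist)


declare hs.simps(3)[simp del]

lemma hs_sw2: "hs d (c # a # b # l) = hs d (c # b # a # l)"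
  by (rule hs_tail) (rule hs_swap)
lemma hs_sw3: "hs d (c # e # a # b # l) = hs d (c # e # b # a # l)"
  by (rule hs_tail) (rule hs_sw2)

lemma perm3: "hs d [v, v, -u, u] = hs d [-u, u, v, v]"
proof -
  have "hs d [v, v, -u, u] = hs d [v, -u, v, u]" by (rule hs_sw2)
  also have "\<dots> = hs d [-u, v, v, u]" by (rule hs_swap)
  also have "\<dots> = hs d [-u, v, u, v]" by (rule hs_sw3)
  also have "\<dots> = hs d [-u, u, v, v]" by (rule hs_sw2)
  finally show ?thesis .
qed

lemma E_lemma:
  fixes u v :: "'a::idom"
  assumes uv: "u + v \<noteq> 0" and vu: "v - u \<noteq> 0"
  shows "v * (v - u) * (hs (2*n) [v,-v,u,u] + hs (2*n) [v,-v,u,-u] + hs (2*n) [-u,u,v,v])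
     = of_nat (2*Suc n + 1) * ((\<Sum>i = 0..2*Suc n. u^i * (-v)^(2*Suc n - i)) - u^(2*Suc n))"
proof -
  define Cp where "Cp = hs (2*n) [v,-v,u,u] + hs (2*n) [v,-v,u,-u] + hs (2*n) [-u,u,v,v]"
  define S where "S = (\<Sum>i = 0..2*Suc n. u^i * (-v)^(2*Suc n - i))"
  define M where "M = 2 * Suc n"
  have nz: "v^2 - u^2 \<noteq> 0"
  proof -
    have "v^2 - u^2 = (v - u) * (u + v)" by (simp add: algebra_simps power2_eq_square)
    then show ?thesis using uv vu by simp
  qed
  have hC: "(v^2 - u^2) * Cp = of_nat (M + 1) * (v^M - u^M)"
    using Cprime[OF nz, of n] by (simp add: Cp_def M_def)
  have hS: "(u + v) * S = u^(M+1) + v^(M+1)"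
  proof -
    have se: "(\<Sum>p<Suc M. u ^ p * (-v) ^ (M - p)) = S"
      by (simp add: S_def M_def lessThan_Suc_atMost atLeast0AtMost)
    have d: "u ^ Suc M - (-v) ^ Suc M = (u - - v) * S"
      using diff_power_eq_sum[of u M "-v"] unfolding se .
    have ng: "(-v) ^ Suc M = - (v ^ Suc M)" by (simp add: M_def)
    have "u ^ Suc M + v ^ Suc M = (u + v) * S" using d unfolding ng by simp
    then show ?thesis by simp
  qed
  have "(u + v) * (v * (v - u) * Cp) = v * ((v^2 - u^2) * Cp)" by (simp add: algebra_simps power2_eq_square)
  also have "\<dots> = v * (of_nat (M + 1) * (v^M - u^M))" by (simp add: hC)
  also have "\<dots> = of_nat (M + 1) * ((u + v) * S - (u + v) * u^M)" unfolding hS by (simp add: algebra_simps)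
  also have "\<dots> = (u + v) * (of_nat (M + 1) * (S - u^M))" by (simp add: algebra_simps)
  finally have "v * (v - u) * Cp = of_nat (M + 1) * (S - u^M)" using uv by simp
  then show ?thesis by (simp add: Cp_def S_def M_def)
qed

lemma fin_alg:
  fixes y z u v Cp S K U :: "'a::comm_ring_1"
  assumes E: "v * (v - u) * Cp = K * (S - U)"
  shows "(z - y)^2 - (v - u)^2 * Cp - (2 * y * (- z) - 2 * K * S)
       = ((z - y) * (y + z) + (v - u) * (u + v) * Cp) + 2 * (y^2 + K * U)"
proof -
  have "(z - y)^2 - (v - u)^2 * Cp - (2 * y * (- z) - 2 * K * S)
       - (((z - y) * (y + z) + (v - u) * (u + v) * Cp) + 2 * (y^2 + K * U))
       = 2 * (K * (S - U) - v * (v - u) * Cp)"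
    by (simp add: algebra_simps power2_eq_square)
  also have "\<dots> = 0" using E by simp
  finally show ?thesis by simp
qed

lemma FpH_sq: "mmul (FpH N) (FpH N) = scal (qq2^2 - qq1^2 * CC N)"
proof (intro ext)
  fix i j :: "bool \<times> bool"
  show "mmul (FpH N) (FpH N) i j = scal (qq2^2 - qq1^2 * CC N) i j"
    by (cases i; cases j)
      (auto simp: mmul_def sum_bb FpH_def evenOdd_def mat2_def scal_def power2_eq_square algebra_simps)
qed

theorem mainTheorem3:
  fixes N :: nat
  assumes "N \<ge> 1"
  shows "homotopic parityPV (Dpar N) (mmul (Hmor N) (Fmor N))
           (scal (2 * Y 1 * Y 2 - 2 * of_nat (2 * N + 1) * (\<Sum>i = 0..2 * N. X 1 ^ i * X 2 ^ (2 * N - i))))"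
proof -
  obtain n where N: "N = Suc n" using assms by (cases N) auto
  define Cp where "Cp = hs (2*n) [X 4, - X 4, X 1, X 1] + hs (2*n) [X 4, - X 4, X 1, - X 1]
      + hs (2*n) [- X 1, X 1, X 4, X 4]"
  define S where "S = (\<Sum>i = 0..2 * N. X 1 ^ i * (- X 4) ^ (2 * N - i))"
  define K :: R where "K = of_nat (2 * N + 1)"
  define a where "a = qq2^2 - qq1^2 * CC N"
  define c0 where "c0 = 2 * Y 1 * Y 2 - 2 * of_nat (2 * N + 1) * (\<Sum>i = 0..2 * N. X 1 ^ i * X 2 ^ (2 * N - i))"
  have qq2c: "CG N qq2 (Y 4 - Y 1)"
    unfolding qq2_def by (rule cg_eqr[OF cg_add[OF cY3 cg_refl]]) simp
  have qq1c: "CG N qq1 (X 4 - X 1)"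
    unfolding qq1_def by (rule cg_eqr[OF cg_add[OF cX3 cg_refl]]) simp
  have CCc: "CG N (CC N) Cp"
  proof -
    have "CG N (CC N) (hs (2*n) [X 4, X 1, - X 4, X 1] + hs (2*n) [X 4, - X 4, - X 1, X 1]
        + hs (2*n) [X 4, X 4, - X 1, X 1])"
      unfolding CC_def N w1 w2 w3
      by (intro cg_add cg_hs; simp only: list_all2_Cons list_all2_Nil; intro conjI TrueI refl cg_refl cmX3 cX2 cmX2)
    moreover have "hs (2*n) [X 4, X 1, - X 4, X 1] = hs (2*n) [X 4, - X 4, X 1, X 1]" by (rule hs_sw2)
    moreover have "hs (2*n) [X 4, - X 4, - X 1, X 1] = hs (2*n) [X 4, - X 4, X 1, - X 1]" by (rule hs_sw3)
    moreover have "hs (2*n) [X 4, X 4, - X 1, X 1] = hs (2*n) [- X 1, X 1, X 4, X 4]" by (rule perm3)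
    ultimately show ?thesis by (simp add: Cp_def)
  qed
  have ac: "CG N a ((Y 4 - Y 1)^2 - (X 4 - X 1)^2 * Cp)"
    unfolding a_def by (intro cg_diff cg_mult cg_pow qq2c qq1c CCc)
  have cc: "CG N c0 (2 * Y 1 * (- Y 4) - 2 * K * S)"
    unfolding c0_def K_def S_def by (intro cg_diff cg_mult cg_refl cY2 cg_sum' cg_pow cX2)
  have Ac: "CG N (Acmn N) (Y 1 ^ 2 + K * X 1 ^ (2 * N))"
  proof -
    have "CG N (Acmn N) (- (- Y 1 + Y 4) * (Y 1 + - Y 4 + Y 4) - Y 1 * - Y 4 + hs (2 * N) [- X 1, - X 1]
        + 0 * wdd N [X 1, X 2, - X 3] - 0 * (X 1 + X 4) * (wdd N [X 1, - X 1, X 2, X 4] + wdd N [X 1, - X 1, - X 2, X 4]))"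
      unfolding Acmn_def wA
      by (intro cg_add cg_diff cg_mult cg_uminus cX24 cY3 cY2 cg_refl cg_hs; simp only: list_all2_Cons list_all2_Nil; intro conjI refl cg_refl cX3)
    moreover have "hs (2 * N) [- X 1, - X 1] = K * X 1 ^ (2 * N)"
      by (simp add: hs_same K_def power_mult)
    ultimately show ?thesis by (simp add: algebra_simps power2_eq_square)
  qed
  have b2c: "CG N (qq2 * rr2 + qq1 * rr1 * CC N) ((Y 4 - Y 1) * (Y 1 + Y 4) + (X 4 - X 1) * (X 1 + X 4) * Cp)"
    unfolding rr1_def rr2_def by (intro cg_add cg_mult qq2c qq1c CCc cg_refl)
  have nA: "ZZ N (Y 1 ^ 2 + K * X 1 ^ (2 * N))" by (rule nh_cg[OF cg_sym[OF Ac] nh_k(2)])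
  have nB: "ZZ N ((Y 4 - Y 1) * (Y 1 + Y 4) + (X 4 - X 1) * (X 1 + X 4) * Cp)"
    by (rule nh_cg[OF cg_sym[OF b2c] nh_g(3)])
  have uv: "X 1 + X 4 \<noteq> 0"
  proof
    assume "X 1 + X 4 = 0"
    then have "X 1 = - X 4" by (simp add: eq_neg_iff_add_eq_0)
    then show False by (simp add: Xdist)
  qed
  have vu: "X 4 - X 1 \<noteq> 0" by (simp add: Xdist)
  have E: "X 4 * (X 4 - X 1) * Cp = K * (S - X 1 ^ (2 * N))"
    using E_lemma[OF uv vu, of n] by (simp add: Cp_def S_def K_def N)
  have fin: "(Y 4 - Y 1)^2 - (X 4 - X 1)^2 * Cp - (2 * Y 1 * (- Y 4) - 2 * K * S)
     = ((Y 4 - Y 1) * (Y 1 + Y 4) + (X 4 - X 1) * (X 1 + X 4) * Cp) + 2 * (Y 1 ^ 2 + K * X 1 ^ (2 * N))"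
    by (rule fin_alg[OF E])
  have "ZZ N ((Y 4 - Y 1)^2 - (X 4 - X 1)^2 * Cp - (2 * Y 1 * (- Y 4) - 2 * K * S))"
    unfolding fin by (intro nh_add nh_mult nA nB)
  then have nac: "ZZ N (a - c0)" by (rule nh_cg[OF cg_diff[OF ac cc]])
  then obtain Xh where o: "\<forall>i j. parityPV i = parityPV j \<longrightarrow> Xh i j = 0"
     and h: "\<forall>i j. scal (a - c0) i j = mmul (Dpar N) Xh i j + mmul Xh (Dpar N) i j"
    unfolding nh_def by blast
  have HF: "mmul (Hmor N) (Fmor N) = scal a"
    unfolding Hmor_def Fmor_def idTens_mmul FpH_sq a_def idTens_scal ..
  show ?thesis
    unfolding homotopic_def HF c0_def[symmetric]
  proof (intro exI[of _ Xh] conjI allI impI)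
    fix i j :: "(bool \<times> bool) \<times> (bool \<times> bool)" show "parityPV i = parityPV j \<Longrightarrow> Xh i j = 0" using o by blast
  next
    fix i j :: "(bool \<times> bool) \<times> (bool \<times> bool)"
    have "scal a i j - scal c0 i j = scal (a - c0) i j" by (simp add: scal_def)
    then show "scal a i j - scal c0 i j = mmul (Dpar N) Xh i j + mmul Xh (Dpar N) i j" using h by simp
  qed
qed


end
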